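(* Let $\mathbb{P}: M_2 \to M_2$ be the linear map $$\mathbb{P}\begin{pmatrix} x_{11} & x_{12} \\ x_{21} & x_{22}\end{pmatrix} = \begin{pmatrix} \frac{x_{11}+x_{22}}{2} & x_{12} \\ x_{21} & \frac{x_{11}+x_{22}}{2}\end{pmatrix}.$$ For a constant $\kappa_3$, define the linear map $\Phi_3$ on operators on $\mathbb{C}^2\otimes\mathbb{C}^2\otimes\mathbb{C}^2$ by $$\Phi_3(\varrho) = (\mathbb{P}\otimes\mathbb{I}\otimes\mathbb{I})(\varrho) + (\mathbb{I}\otimes\mathbb{P}\otimes\mathbb{I})(\varrho) + (\mathbb{I}\otimes\mathbb{I}\otimes\mathbb{P})(\varrho) + \kappa_3\, \mathrm{Tr}(\varrho)\, I,$$ where $\mathbb{I}$ is the identity map on $M_2$ and $I$ is the $8\times 8$ identity matrix. If $\kappa_3=\frac12$, then $\Phi_3(\rho)\ge 0$ for every biseparable three-qubit state $\rho$.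
   Context: A three-qubit state $\rho$ is biseparable if it can be written as $\rho = p_1\,\rho_1\otimes\rho_{23} + p_2\,\rho_2\otimes\rho_{13} + p_3\,\rho_3\otimes\rho_{12}$ (each term being a convex combination of product states across the indicated bipartition $1|23$, $2|13$, $3|12$ respectively, with the tensor factors placed on the indicated qubits), where $p_i\ge 0$, $\sum_i p_i=1$, and $\rho_i$, $\rho_{jk}$ are density matrices on the indicated qubits. $M_2$ is the space of complex $2\times 2$ matrices. *)

theory Defs
  imports "HOL-Analysis.Analysis"
begin

text \<open>Operators (square matrices) on C^('a), indexed by a finite type 'a.
  One qubit: index type bool (False = |0>, True = |1>).
  Three qubits: index type bool \<times> bool \<times> bool, the triple (i1,i2,i3) being the
  basis vector |i1 i2 i3> of C^2 (x) C^2 (x) C^2 (qubit 1 first).\<close>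
type_synonym 'a op = "'a \<Rightarrow> 'a \<Rightarrow> complex"
type_synonym qb3 = "bool \<times> bool \<times> bool"

definition tr :: "('a::finite) op \<Rightarrow> complex" where
  "tr A = (\<Sum>i\<in>UNIV. A i i)"

definition idop :: "('a::finite) op" where
  "idop = (\<lambda>i j. if i = j then 1 else 0)"

definition psd :: "('a::finite) op \<Rightarrow> bool" where
  "psd A \<longleftrightarrow> (\<forall>v :: 'a \<Rightarrow> complex.
     Im (\<Sum>i\<in>UNIV. \<Sum>j\<in>UNIV. cnj (v i) * A i j * v j) = 0 \<and>
     0 \<le> Re (\<Sum>i\<in>UNIV. \<Sum>j\<in>UNIV. cnj (v i) * A i j * v j))"

definition density :: "('a::finite) op \<Rightarrow> bool" where
  "density A \<longleftrightarrow> psd A \<and> tr A = 1"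

text \<open>Tensor products placing the one-qubit factor on qubit 1, 2, 3 respectively,
  and the two-qubit factor on the remaining qubits (in increasing order).\<close>
definition tensor1 :: "bool op \<Rightarrow> (bool \<times> bool) op \<Rightarrow> qb3 op" where
  "tensor1 a b = (\<lambda>(i1,i2,i3) (j1,j2,j3). a i1 j1 * b (i2,i3) (j2,j3))"
definition tensor2 :: "bool op \<Rightarrow> (bool \<times> bool) op \<Rightarrow> qb3 op" where
  "tensor2 a b = (\<lambda>(i1,i2,i3) (j1,j2,j3). a i2 j2 * b (i1,i3) (j1,j3))"
definition tensor3 :: "bool op \<Rightarrow> (bool \<times> bool) op \<Rightarrow> qb3 op" where
  "tensor3 a b = (\<lambda>(i1,i2,i3) (j1,j2,j3). a i3 j3 * b (i1,i2) (j1,j2))"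

definition bipartite_product_states :: "qb3 op set" where
  "bipartite_product_states =
     {tensor1 a b | a b. density a \<and> density b} \<union>
     {tensor2 a b | a b. density a \<and> density b} \<union>
     {tensor3 a b | a b. density a \<and> density b}"

definition biseparable :: "qb3 op \<Rightarrow> bool" where
  "biseparable \<rho> \<longleftrightarrow> (\<exists>(n::nat) (w::nat \<Rightarrow> real) (\<sigma>::nat \<Rightarrow> qb3 op).
     (\<forall>k<n. 0 \<le> w k \<and> \<sigma> k \<in> bipartite_product_states) \<and>
     (\<Sum>k<n. w k) = 1 \<and>
     \<rho> = (\<lambda>x y. \<Sum>k<n. complex_of_real (w k) * \<sigma> k x y))"

definition Pmap :: "bool op \<Rightarrow> bool op" where
  "Pmap x = (\<lambda>i j. if i = j then (x False False + x True True) / 2 else x i j)"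

definition P1 :: "qb3 op \<Rightarrow> qb3 op" where
  "P1 \<rho> = (\<lambda>(i1,i2,i3) (j1,j2,j3). Pmap (\<lambda>a b. \<rho> (a,i2,i3) (b,j2,j3)) i1 j1)"
definition P2 :: "qb3 op \<Rightarrow> qb3 op" where
  "P2 \<rho> = (\<lambda>(i1,i2,i3) (j1,j2,j3). Pmap (\<lambda>a b. \<rho> (i1,a,i3) (j1,b,j3)) i2 j2)"
definition P3 :: "qb3 op \<Rightarrow> qb3 op" where
  "P3 \<rho> = (\<lambda>(i1,i2,i3) (j1,j2,j3). Pmap (\<lambda>a b. \<rho> (i1,i2,a) (j1,j2,b)) i3 j3)"

definition Phi3 :: "real \<Rightarrow> qb3 op \<Rightarrow> qb3 op" where
  "Phi3 \<kappa> \<rho> = (\<lambda>x y. P1 \<rho> x y + P2 \<rho> x y + P3 \<rho> x y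
                        + complex_of_real \<kappa> * tr \<rho> * idop x y)"

end

theory Submission
  imports Defs
begin


definition qf :: "('a::finite) op \<Rightarrow> ('a \<Rightarrow> complex) \<Rightarrow> complex" where
  "qf A v = (\<Sum>i\<in>UNIV. \<Sum>j\<in>UNIV. cnj (v i) * A i j * v j)"

lemma psd_qf: "psd A \<longleftrightarrow> (\<forall>v. Im (qf A v) = 0 \<and> 0 \<le> Re (qf A v))"
  by (simp add: psd_def qf_def)

lemma sum_UNIV_bool: "(\<Sum>x\<in>(UNIV::bool set). f x) = f False + f True"
  by (simp add: UNIV_bool)

lemma sum_UNIV_prod: "(\<Sum>x\<in>(UNIV::('a::finite \<times> 'b::finite) set). f x) = (\<Sum>a\<in>UNIV. \<Sum>b\<in>UNIV. f (a,b))"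
  by (subst UNIV_Times_UNIV[symmetric], subst sum.cartesian_product) simp

lemma sq2: "(2*(r::real))^2 = 4*r^2" by (simp add: power2_eq_square)
lemma absaux: "\<bar>(a::real)\<bar> \<le> \<bar>b\<bar> \<Longrightarrow> 0 \<le> b \<Longrightarrow> 0 \<le> b + a" by linarith

lemma key:
  fixes p q X Y :: real and c z :: complex
  assumes "p \<ge> 0" "q \<ge> 0" "X \<ge> 0" "Y \<ge> 0" "(cmod c)^2 \<le> p*q" "(cmod z)^2 \<le> X*Y"
  shows "0 \<le> p*X + q*Y + 2*Re(c*z)"
proof -
  have h1: "\<bar>Re(c*z)\<bar> \<le> \<bar>cmod c * cmod z\<bar>" using abs_Re_le_cmod[of "c*z"] by (simp add: norm_mult)
  have h2: "(cmod c * cmod z)^2 \<le> (p*q)*(X*Y)"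
    unfolding power_mult_distrib by (rule mult_mono) (use assms in simp_all)
  have h3: "4*((p*q)*(X*Y)) \<le> (p*X+q*Y)^2"
  proof -
    have "0 \<le> (p*X-q*Y)^2" by (rule zero_le_power2)
    also have "(p*X-q*Y)^2 = (p*X+q*Y)^2 - 4*((p*q)*(X*Y))" by (simp add: power2_eq_square algebra_simps)
    finally show ?thesis by simp
  qed
  have "(2*Re(c*z))^2 \<le> (p*X+q*Y)^2"
  proof -
    have "(Re(c*z))^2 \<le> (cmod c * cmod z)^2"
      using h1 abs_le_square_iff by blast
    moreover have "(2*Re(c*z))^2 = 4*(Re(c*z))^2" by (rule sq2)
    ultimately show ?thesis using h2 h3 by linarith
  qed
  then have "\<bar>2*Re(c*z)\<bar> \<le> \<bar>p*X+q*Y\<bar>" using abs_le_square_iff by blast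
  moreover have "p*X+q*Y \<ge> 0" using assms by simp
  ultimately show ?thesis by (rule absaux)
qed

definition h2 :: "bool op \<Rightarrow> bool" where
  "h2 a \<longleftrightarrow> Im (a False False) = 0 \<and> Im (a True True) = 0 \<and> Re (a False False) \<ge> 0 \<and>
     Re (a True True) \<ge> 0 \<and> a True False = cnj (a False True) \<and>
     (cmod (a False True))^2 \<le> Re (a False False) * Re (a True True)"

lemma qf_bool: "qf (a::bool op) v = cnj (v False) * a False False * v False + cnj (v False) * a False True * v True
   + cnj (v True) * a True False * v False + cnj (v True) * a True True * v True"
  by (simp add: qf_def sum_UNIV_bool)

lemma h2_psd: assumes "h2 a" shows "psd a"
  unfolding psd_qf
proof
  fix v
  define p where "p = Re (a False False)"
  define q where "q = Re (a True True)"
  define c where "c = a False True"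
  have pq: "a False False = complex_of_real p" "a True True = complex_of_real q" "a False True = c"
     "a True False = cnj c" using assms unfolding h2_def p_def q_def c_def by (simp_all add: complex_eq_iff)
  have pqc: "p \<ge> 0" "q \<ge> 0" "(cmod c)^2 \<le> p*q"
    using assms unfolding h2_def p_def q_def c_def by simp_all
  let ?z = "cnj (v False) * v True"
  have e0: "qf a v = complex_of_real p * (v False * cnj (v False)) + complex_of_real q * (v True * cnj (v True)) + (c * ?z + cnj (c * ?z))"
    unfolding qf_bool pq by (simp add: mult_ac add_ac)
  have e: "qf a v = complex_of_real (p * (cmod (v False))^2 + q * (cmod (v True))^2) + (c * ?z + cnj (c * ?z))"
    unfolding e0 complex_norm_square[symmetric] by simp
  have "c * ?z + cnj (c * ?z) = complex_of_real (2 * Re (c * ?z))"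
    by (rule complex_add_cnj)
  then have e2: "qf a v = complex_of_real (p * (cmod (v False))^2 + q * (cmod (v True))^2 + 2 * Re (c * ?z))"
    unfolding e of_real_add by (simp only:)
  have "0 \<le> p * (cmod (v False))^2 + q * (cmod (v True))^2 + 2 * Re (c * ?z)"
  proof (rule key[OF pqc(1,2) _ _ pqc(3)])
    show "(cmod ?z)^2 \<le> (cmod (v False))^2 * (cmod (v True))^2"
      by (simp add: norm_mult power_mult_distrib)
  qed (simp_all only: zero_le_power2)
  then show "Im (qf a v) = 0 \<and> 0 \<le> Re (qf a v)" unfolding e2 Re_complex_of_real Im_complex_of_real by simp
qed
lemma cmsq: "cmod z * cmod z = Re z * Re z + Im z * Im z"
  using cmod_power2[of z] by (simp add: power2_eq_square)

lemma psd_h2: assumes "psd a" shows "h2 a"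
proof -
  have P: "Im (qf a v) = 0 \<and> 0 \<le> Re (qf a v)" for v using assms psd_qf by blast
  from P[of "\<lambda>b. if b then 0 else 1"] have 1: "Im (a False False) = 0" "0 \<le> Re (a False False)"
    by (simp_all add: qf_bool)
  from P[of "\<lambda>b. if b then 1 else 0"] have 2: "Im (a True True) = 0" "0 \<le> Re (a True True)"
    by (simp_all add: qf_bool)
  from P[of "\<lambda>b. 1"] have 3: "Im (a False True) + Im (a True False) = 0" using 1 2 by (simp add: qf_bool)
  from P[of "\<lambda>b. if b then \<i> else 1"] have 4: "Re (a False True) = Re (a True False)" using 1 2
    by (simp add: qf_bool)
  have herm: "a True False = cnj (a False True)" using 3 4 by (simp add: complex_eq_iff)
  define p where "p = Re (a False False)"
  define q where "q = Re (a True True)"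
  define c where "c = a False True"
  have pq: "a False False = complex_of_real p" "a True True = complex_of_real q" "a False True = c"
     "a True False = cnj c" using 1 2 herm unfolding p_def q_def c_def by (simp_all add: complex_eq_iff)
  have p0: "p \<ge> 0" and q0: "q \<ge> 0" using 1 2 unfolding p_def q_def by simp_all
  have det: "(cmod c)^2 \<le> p*q"
  proof (cases "q > 0")
    case True
    have "Re (qf a (\<lambda>b. if b then - cnj c else of_real q)) = q * (p*q - (cmod c)^2)"
      by (simp add: qf_bool pq cmsq power2_eq_square algebra_simps)
    then have "0 \<le> q * (p*q - (cmod c)^2)" using P by metis
    with True show ?thesis by (simp add: zero_le_mult_iff)
  next
    case False
    then have qz: "q = 0" using q0 by simp
    show ?thesis
    proof (cases "p > 0")
      case True
      have "Re (qf a (\<lambda>b. if b then - of_real p else c)) = p * (p*q - (cmod c)^2)"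
        by (simp add: qf_bool pq cmsq power2_eq_square algebra_simps)
      then have "0 \<le> p * (p*q - (cmod c)^2)" using P by metis
      with True show ?thesis by (simp add: zero_le_mult_iff)
    next
      case False
      then have pz: "p = 0" using p0 by simp
      have "Re (qf a (\<lambda>b. if b then - cnj c else 1)) = - 2 * (cmod c)^2"
        by (simp add: qf_bool pq pz qz cmsq power2_eq_square algebra_simps)
      then have "0 \<le> - 2 * (cmod c)^2" using P by metis
      then show ?thesis using pz qz by simp
    qed
  qed
  show ?thesis unfolding h2_def using 1 2 herm det unfolding p_def q_def c_def by simp
qed

lemma psd_iff_h2: "psd a \<longleftrightarrow> h2 a" using psd_h2 h2_psd by blast
definition tens :: "bool op \<Rightarrow> ('b::finite) op \<Rightarrow> (bool \<times> 'b) op" where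
  "tens a B = (\<lambda>(i,x) (j,y). a i j * B x y)"

lemma qf_tens:
  fixes B :: "('b::finite) op"
  shows "qf (tens a B) v = (\<Sum>i\<in>UNIV. \<Sum>k\<in>UNIV. a i k * (\<Sum>x\<in>UNIV. \<Sum>y\<in>UNIV. cnj (v (i,x)) * B x y * v (k,y)))"
proof -
  have "qf (tens a B) v = (\<Sum>i\<in>UNIV. \<Sum>x\<in>UNIV. \<Sum>k\<in>UNIV. \<Sum>y\<in>UNIV. a i k * (cnj (v (i,x)) * B x y * v (k,y)))"
    unfolding qf_def tens_def sum_UNIV_prod by (simp add: mult_ac)
  also have "\<dots> = (\<Sum>i\<in>UNIV. \<Sum>k\<in>UNIV. \<Sum>x\<in>UNIV. \<Sum>y\<in>UNIV. a i k * (cnj (v (i,x)) * B x y * v (k,y)))"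
    by (rule sum.cong[OF refl], rule sum.swap)
  also have "\<dots> = (\<Sum>i\<in>UNIV. \<Sum>k\<in>UNIV. a i k * (\<Sum>x\<in>UNIV. \<Sum>y\<in>UNIV. cnj (v (i,x)) * B x y * v (k,y)))"
    by (simp add: sum_distrib_left)
  finally show ?thesis .
qed

lemma qf_gram:
  fixes B :: "('b::finite) op"
  shows "qf (\<lambda>i k. \<Sum>x\<in>UNIV. \<Sum>y\<in>UNIV. cnj (v (i,x)) * B x y * v (k,y)) u
       = qf B (\<lambda>x. u False * v (False,x) + u True * v (True,x))"
  unfolding qf_bool unfolding qf_def
  by (simp add: sum_distrib_left sum_distrib_right sum.distrib algebra_simps)

lemma psd_tens: fixes B :: "('b::finite) op" assumes "psd a" "psd B" shows "psd (tens a B)"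
  unfolding psd_qf
proof
  fix v
  define G :: "bool op" where "G = (\<lambda>i k. \<Sum>x\<in>UNIV. \<Sum>y\<in>UNIV. cnj (v (i,x)) * B x y * v (k,y))"
  have "psd G" unfolding psd_qf G_def qf_gram using assms(2) psd_qf by blast
  then have hG: "h2 G" by (rule psd_h2)
  have ha: "h2 a" using assms(1) by (rule psd_h2)
  have e: "qf (tens a B) v = a False False * G False False + a False True * G False True
     + a True False * G True False + a True True * G True True"
    unfolding qf_tens by (simp add: sum_UNIV_bool G_def add_ac)
  define p where "p = Re (a False False)"
  define q where "q = Re (a True True)"
  define c where "c = a False True"
  define X where "X = Re (G False False)"
  define Y where "Y = Re (G True True)"
  define z where "z = G False True"
  have pq: "a False False = complex_of_real p" "a True True = complex_of_real q" "a False True = c"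
     "a True False = cnj c" using ha unfolding h2_def p_def q_def c_def by (simp_all add: complex_eq_iff)
  have XY: "G False False = complex_of_real X" "G True True = complex_of_real Y" "G False True = z"
     "G True False = cnj z" using hG unfolding h2_def X_def Y_def z_def by (simp_all add: complex_eq_iff)
  have e2: "qf (tens a B) v = complex_of_real (p*X + q*Y) + (c*z + cnj (c*z))"
    unfolding e pq XY by simp
  have e3: "qf (tens a B) v = complex_of_real (p*X + q*Y + 2 * Re (c*z))"
    unfolding e2 complex_add_cnj by simp
  have "0 \<le> p*X + q*Y + 2 * Re (c*z)"
    by (rule key) (use ha hG in \<open>simp_all add: h2_def p_def q_def c_def X_def Y_def z_def\<close>)
  then show "Im (qf (tens a B) v) = 0 \<and> 0 \<le> Re (qf (tens a B) v)" unfolding e3 by simp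
qed


definition PA :: "(bool \<times> bool) op \<Rightarrow> (bool \<times> bool) op" where
  "PA b = (\<lambda>(i1,i2) (j1,j2). Pmap (\<lambda>a c. b (a,i2) (c,j2)) i1 j1)"
definition PB :: "(bool \<times> bool) op \<Rightarrow> (bool \<times> bool) op" where
  "PB b = (\<lambda>(i1,i2) (j1,j2). Pmap (\<lambda>a c. b (i1,a) (j1,c)) i2 j2)"
definition Qh :: "(bool \<times> bool) op \<Rightarrow> (bool \<times> bool) op" where
  "Qh b = (\<lambda>x y. PA b x y + PB b x y + 1/2 * tr b * idop x y)"

lemma qf_Qh:
  "qf (Qh b) v = 3/2 * qf b v + 1/2 * (qf b (\<lambda>(i,j). v (\<not>i, j)) + qf b (\<lambda>(i,j). (if i then -1 else 1) * v (\<not>i, j))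
     + qf b (\<lambda>(i,j). v (i, \<not>j)) + qf b (\<lambda>(i,j). (if j then -1 else 1) * v (i, \<not>j))
     + qf b (\<lambda>(i,j). cnj ((if i = j then 1 else -1) * v (\<not>i, \<not>j))))"
  unfolding qf_def Qh_def PA_def PB_def Pmap_def tr_def idop_def sum_UNIV_prod sum_UNIV_bool
  by (simp add: field_simps)

lemma psd_Qh: assumes "psd b" shows "psd (Qh b)"
  unfolding psd_qf
proof
  fix v
  have P: "Im (qf b u) = 0 \<and> 0 \<le> Re (qf b u)" for u using assms psd_qf by blast
  show "Im (qf (Qh b) v) = 0 \<and> 0 \<le> Re (qf (Qh b) v)"
    unfolding qf_Qh using P by simp
qed

lemma qf_add: "qf (\<lambda>x y. A x y + B x y) v = qf A v + qf B v"
  by (simp add: qf_def sum.distrib algebra_simps)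

lemma psd_add: assumes "psd A" "psd B" shows "psd (\<lambda>x y. A x y + B x y)"
  using assms unfolding psd_qf qf_add by simp

lemma qf_scale: "qf (\<lambda>x y. c * A x y) v = c * qf A v"
  by (simp add: qf_def sum_distrib_left algebra_simps)

lemma psd_scale: assumes "psd A" "0 \<le> r" shows "psd (\<lambda>x y. complex_of_real r * A x y)"
  using assms unfolding psd_qf qf_scale by simp

lemma psd_zero: "psd (\<lambda>(x::'a::finite) (y::'a). 0)"
  unfolding psd_qf by (simp add: qf_def)

lemma psd_comb:
  fixes M :: "nat \<Rightarrow> ('a::finite) op"
  assumes "\<forall>k<n. 0 \<le> w k \<and> psd (M k)"
  shows "psd (\<lambda>x y. \<Sum>k<n. complex_of_real (w k) * M k x y)"
  using assms
proof (induction n)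
  case 0
  then show ?case using psd_zero by simp
next
  case (Suc n)
  have "psd (\<lambda>x y. (\<Sum>k<n. complex_of_real (w k) * M k x y) + complex_of_real (w n) * M n x y)"
    by (rule psd_add) (use Suc in \<open>auto intro: psd_scale\<close>)
  then show ?case by simp
qed

lemma qf_reindex:
  assumes "bij f"
  shows "qf (\<lambda>x y. A (f x) (f y)) v = qf A (\<lambda>p. v (inv f p))"
proof -
  have iv: "inv f (f x) = x" for x using assms by (simp add: bij_is_inj)
  have "qf (\<lambda>x y. A (f x) (f y)) v = (\<Sum>x\<in>UNIV. \<Sum>y\<in>UNIV. cnj (v (inv f (f x))) * A (f x) (f y) * v (inv f (f y)))"
    unfolding qf_def iv ..
  also have "\<dots> = (\<Sum>x\<in>UNIV. \<Sum>y\<in>UNIV. cnj (v (inv f x)) * A x y * v (inv f y))"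
    using assms
    by (subst sum.reindex_bij_betw[of f UNIV UNIV, symmetric], simp,
        subst sum.reindex_bij_betw[of f UNIV UNIV, symmetric], simp_all)
  finally show ?thesis unfolding qf_def .
qed

lemma psd_reindex: assumes "bij f" "psd A" shows "psd (\<lambda>x y. A (f x) (f y))"
  using assms unfolding psd_qf qf_reindex[OF assms(1)] by blast

lemma tensor1_tens: "tensor1 a b = tens a b"
  by (auto simp: tensor1_def tens_def fun_eq_iff)

lemma tensor2_tens: "tensor2 a b = (\<lambda>x y. tens a b ((\<lambda>(i1,i2,i3). (i2,i1,i3)) x) ((\<lambda>(i1,i2,i3). (i2,i1,i3)) y))"
  by (auto simp: tensor2_def tens_def fun_eq_iff)

lemma tensor3_tens: "tensor3 a b = (\<lambda>x y. tens a b ((\<lambda>(i1,i2,i3). (i3,i1,i2)) x) ((\<lambda>(i1,i2,i3). (i3,i1,i2)) y))"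
  by (auto simp: tensor3_def tens_def fun_eq_iff)

lemma bij2: "bij (\<lambda>(i1::bool,i2::bool,i3::bool). (i2,i1,i3))"
  by (rule o_bij[where g="\<lambda>(i2,i1,i3). (i1,i2,i3)"]) (auto simp: fun_eq_iff)

lemma bij3: "bij (\<lambda>(i1::bool,i2::bool,i3::bool). (i3,i1,i2))"
  by (rule o_bij[where g="\<lambda>(i3,i1,i2). (i1,i2,i3)"]) (auto simp: fun_eq_iff)

lemma psd_tensor1: "psd a \<Longrightarrow> psd b \<Longrightarrow> psd (tensor1 a b)"
  unfolding tensor1_tens by (rule psd_tens)
lemma psd_tensor2: "psd a \<Longrightarrow> psd b \<Longrightarrow> psd (tensor2 a b)"
  unfolding tensor2_tens by (rule psd_reindex[OF bij2 psd_tens])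
lemma psd_tensor3: "psd a \<Longrightarrow> psd b \<Longrightarrow> psd (tensor3 a b)"
  unfolding tensor3_tens by (rule psd_reindex[OF bij3 psd_tens])


lemma psd_Pmap: assumes "psd a" shows "psd (Pmap a)"
proof -
  have h: "h2 a" using assms by (rule psd_h2)
  let ?p = "Re (a False False)" and ?q = "Re (a True True)"
  have "(cmod (a False True))^2 \<le> ?p * ?q" using h unfolding h2_def by simp
  also have "?p * ?q \<le> ((?p + ?q)/2)^2"
  proof -
    have "0 \<le> (?p - ?q)^2" by (rule zero_le_power2)
    then show ?thesis by (simp add: power2_eq_square field_simps)
  qed
  finally have d: "(cmod (a False True))^2 \<le> ((?p + ?q)/2) * ((?p + ?q)/2)" by (simp add: power2_eq_square)
  have "h2 (Pmap a)" unfolding h2_def Pmap_def using h d unfolding h2_def by simp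
  then show ?thesis by (rule h2_psd)
qed

lemma psd_Ima: fixes a :: "bool op" assumes "density a" shows "psd (\<lambda>i j. idop i j - a i j)"
proof -
  have h: "h2 a" using assms unfolding density_def by (simp add: psd_h2)
  have t: "a False False + a True True = 1" using assms unfolding density_def tr_def by (simp add: sum_UNIV_bool)
  then have t1: "1 - a False False = a True True" "1 - a True True = a False False" by (simp_all add: algebra_simps)
  have "h2 (\<lambda>i j. idop i j - a i j)" unfolding h2_def idop_def using h t1 unfolding h2_def
    by (simp add: mult.commute)
  then show ?thesis by (rule h2_psd)
qed

lemma psd_halfid2: "psd (\<lambda>(i::bool) j. 1/2 * idop i j)"
  by (rule h2_psd) (simp add: h2_def idop_def)

lemma psd_id2: "psd (idop :: bool op)"
  by (rule h2_psd) (simp add: h2_def idop_def)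

lemma psd_halfid4: "psd (\<lambda>(i::bool\<times>bool) j. 1/2 * idop i j)"
proof -
  have "(\<lambda>(i::bool\<times>bool) j. 1/2 * idop i j) = tens (\<lambda>i j. 1/2 * idop i j) idop"
    by (auto simp: tens_def idop_def fun_eq_iff)
  then show ?thesis using psd_tens[OF psd_halfid2 psd_id2] by simp
qed

lemma tr_tensor1: "tr (tensor1 a b) = tr a * tr b"
  by (simp add: tr_def tensor1_def sum_UNIV_prod sum_UNIV_bool algebra_simps)
lemma tr_tensor2: "tr (tensor2 a b) = tr a * tr b"
  by (simp add: tr_def tensor2_def sum_UNIV_prod sum_UNIV_bool algebra_simps)
lemma tr_tensor3: "tr (tensor3 a b) = tr a * tr b"
  by (simp add: tr_def tensor3_def sum_UNIV_prod sum_UNIV_bool algebra_simps)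

lemma Pmap_scale: "Pmap (\<lambda>a b. c * f a b) i j = c * Pmap f i j"
  by (simp add: Pmap_def algebra_simps)
lemma Pmap_scaler: "Pmap (\<lambda>a b. f a b * c) i j = Pmap f i j * c"
  by (simp add: Pmap_def algebra_simps)
lemma idop_1: "idop (i1,i2,i3) (j1,j2,j3) = idop i1 j1 * idop (i2,i3) (j2,j3)"
  by (simp add: idop_def)
lemma idop_2: "idop (i1,i2,i3) (j1,j2,j3) = idop i2 j2 * idop (i1,i3) (j1,j3)"
  by (simp add: idop_def)
lemma idop_3: "idop (i1,i2,i3) (j1,j2,j3) = idop i3 j3 * idop (i1,i2) (j1,j2)"
  by (simp add: idop_def)

lemma decomp1:
  assumes "tr a = 1" "tr b = 1"
  shows "Phi3 (1/2) (tensor1 a b) = (\<lambda>x y. tensor1 (Pmap a) b x y + tensor1 a (Qh b) x y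
           + tensor1 (\<lambda>i j. idop i j - a i j) (\<lambda>i j. 1/2 * idop i j) x y)"
proof (intro ext)
  fix x y :: qb3
  obtain i1 i2 i3 where x: "x = (i1,i2,i3)" by (cases x) auto
  obtain j1 j2 j3 where y: "y = (j1,j2,j3)" by (cases y) auto
  show "Phi3 (1/2) (tensor1 a b) x y = tensor1 (Pmap a) b x y + tensor1 a (Qh b) x y
           + tensor1 (\<lambda>i j. idop i j - a i j) (\<lambda>i j. 1/2 * idop i j) x y"
    unfolding x y Phi3_def tr_tensor1 assms
    by (simp add: P1_def P2_def P3_def tensor1_def Qh_def PA_def PB_def Pmap_scale Pmap_scaler idop_1 assms algebra_simps) (simp add: field_simps)
qed

lemma decomp2:
  assumes "tr a = 1" "tr b = 1"
  shows "Phi3 (1/2) (tensor2 a b) = (\<lambda>x y. tensor2 (Pmap a) b x y + tensor2 a (Qh b) x y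
           + tensor2 (\<lambda>i j. idop i j - a i j) (\<lambda>i j. 1/2 * idop i j) x y)"
proof (intro ext)
  fix x y :: qb3
  obtain i1 i2 i3 where x: "x = (i1,i2,i3)" by (cases x) auto
  obtain j1 j2 j3 where y: "y = (j1,j2,j3)" by (cases y) auto
  show "Phi3 (1/2) (tensor2 a b) x y = tensor2 (Pmap a) b x y + tensor2 a (Qh b) x y
           + tensor2 (\<lambda>i j. idop i j - a i j) (\<lambda>i j. 1/2 * idop i j) x y"
    unfolding x y Phi3_def tr_tensor2 assms
    by (simp add: P1_def P2_def P3_def tensor2_def Qh_def PA_def PB_def Pmap_scale Pmap_scaler idop_2 assms algebra_simps) (simp add: field_simps)
qed

lemma decomp3:
  assumes "tr a = 1" "tr b = 1"
  shows "Phi3 (1/2) (tensor3 a b) = (\<lambda>x y. tensor3 (Pmap a) b x y + tensor3 a (Qh b) x y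
           + tensor3 (\<lambda>i j. idop i j - a i j) (\<lambda>i j. 1/2 * idop i j) x y)"
proof (intro ext)
  fix x y :: qb3
  obtain i1 i2 i3 where x: "x = (i1,i2,i3)" by (cases x) auto
  obtain j1 j2 j3 where y: "y = (j1,j2,j3)" by (cases y) auto
  show "Phi3 (1/2) (tensor3 a b) x y = tensor3 (Pmap a) b x y + tensor3 a (Qh b) x y
           + tensor3 (\<lambda>i j. idop i j - a i j) (\<lambda>i j. 1/2 * idop i j) x y"
    unfolding x y Phi3_def tr_tensor3 assms
    by (simp add: P1_def P2_def P3_def tensor3_def Qh_def PA_def PB_def Pmap_scale Pmap_scaler idop_3 assms algebra_simps) (simp add: field_simps)
qed

lemma tuple_cases: obtains i1 i2 i3 where "(x::qb3) = (i1,i2,i3)" by (cases x) auto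

lemma Phi3_zero: "Phi3 k (\<lambda>x y. 0) = (\<lambda>x y. 0)"
proof (intro ext)
  fix x y :: qb3
  obtain i1 i2 i3 where x: "x = (i1,i2,i3)" by (rule tuple_cases)
  obtain j1 j2 j3 where y: "y = (j1,j2,j3)" by (rule tuple_cases)
  show "Phi3 k (\<lambda>x y. 0) x y = 0"
    unfolding x y by (simp add: Phi3_def P1_def P2_def P3_def Pmap_def tr_def)
qed

lemma Pmap_add: "Pmap (\<lambda>a b. f a b + g a b) i j = Pmap f i j + Pmap g i j"
  by (simp add: Pmap_def add_divide_distrib)
lemma tr_add: "tr (\<lambda>x y. A x y + B x y) = tr A + tr B"
  by (simp add: tr_def sum.distrib)
lemma tr_scale: "tr (\<lambda>x y. c * A x y) = c * tr A"
  by (simp add: tr_def sum_distrib_left)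

lemma Phi3_add: "Phi3 k (\<lambda>x y. A x y + B x y) = (\<lambda>x y. Phi3 k A x y + Phi3 k B x y)"
proof (intro ext)
  fix x y :: qb3
  obtain i1 i2 i3 where x: "x = (i1,i2,i3)" by (rule tuple_cases)
  obtain j1 j2 j3 where y: "y = (j1,j2,j3)" by (rule tuple_cases)
  show "Phi3 k (\<lambda>x y. A x y + B x y) x y = Phi3 k A x y + Phi3 k B x y"
    unfolding x y Phi3_def P1_def P2_def P3_def tr_add
    by (simp add: Pmap_add algebra_simps)
qed

lemma Phi3_scale: "Phi3 k (\<lambda>x y. c * A x y) = (\<lambda>x y. c * Phi3 k A x y)"
proof (intro ext)
  fix x y :: qb3
  obtain i1 i2 i3 where x: "x = (i1,i2,i3)" by (rule tuple_cases)
  obtain j1 j2 j3 where y: "y = (j1,j2,j3)" by (rule tuple_cases)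
  show "Phi3 k (\<lambda>x y. c * A x y) x y = c * Phi3 k A x y"
    unfolding x y Phi3_def P1_def P2_def P3_def tr_scale
    by (simp add: Pmap_scale algebra_simps)
qed

lemma Phi3_sum: "Phi3 k (\<lambda>x y. \<Sum>i<(n::nat). c i * s i x y) = (\<lambda>x y. \<Sum>i<n. c i * Phi3 k (s i) x y)"
proof (induction n)
  case 0
  then show ?case using Phi3_zero by simp
next
  case (Suc n)
  have "Phi3 k (\<lambda>x y. \<Sum>i<Suc n. c i * s i x y) = Phi3 k (\<lambda>x y. (\<Sum>i<n. c i * s i x y) + c n * s n x y)"
    by simp
  also have "\<dots> = (\<lambda>x y. Phi3 k (\<lambda>x y. \<Sum>i<n. c i * s i x y) x y + Phi3 k (\<lambda>x y. c n * s n x y) x y)"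
    by (rule Phi3_add)
  also have "\<dots> = (\<lambda>x y. \<Sum>i<Suc n. c i * Phi3 k (s i) x y)"
    unfolding Suc Phi3_scale by simp
  finally show ?case .
qed

lemma psd_bps: assumes "s \<in> bipartite_product_states" shows "psd (Phi3 (1/2) s)"
proof -
  from assms consider
      (c1) a b where "s = tensor1 a b" "density a" "density b"
    | (c2) a b where "s = tensor2 a b" "density a" "density b"
    | (c3) a b where "s = tensor3 a b" "density a" "density b"
    unfolding bipartite_product_states_def by blast
  then show ?thesis
  proof cases
    case c1
    then have ta: "tr a = 1" and tb: "tr b = 1" by (auto simp: density_def)
    show ?thesis unfolding c1(1) decomp1[OF ta tb]
      by (intro psd_add psd_tensor1 psd_Pmap psd_Qh psd_Ima psd_halfid4) (use c1 in \<open>auto simp: density_def\<close>)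
  next
    case c2
    then have ta: "tr a = 1" and tb: "tr b = 1" by (auto simp: density_def)
    show ?thesis unfolding c2(1) decomp2[OF ta tb]
      by (intro psd_add psd_tensor2 psd_Pmap psd_Qh psd_Ima psd_halfid4) (use c2 in \<open>auto simp: density_def\<close>)
  next
    case c3
    then have ta: "tr a = 1" and tb: "tr b = 1" by (auto simp: density_def)
    show ?thesis unfolding c3(1) decomp3[OF ta tb]
      by (intro psd_add psd_tensor3 psd_Pmap psd_Qh psd_Ima psd_halfid4) (use c3 in \<open>auto simp: density_def\<close>)
  qed
qed

theorem theorem1:
  fixes \<rho> :: "qb3 op"
  assumes "biseparable \<rho>"
  shows "psd (Phi3 (1/2) \<rho>)"
proof -
  from assms[unfolded biseparable_def] obtain n :: nat and w :: "nat \<Rightarrow> real" and \<sigma> :: "nat \<Rightarrow> qb3 op" where H0: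
      "(\<forall>k<n. 0 \<le> w k \<and> \<sigma> k \<in> bipartite_product_states) \<and> (\<Sum>k<n. w k) = 1 \<and>
       \<rho> = (\<lambda>x y. \<Sum>k<n. complex_of_real (w k) * \<sigma> k x y)"
    by blast
  have H: "\<forall>k<n. 0 \<le> w k \<and> \<sigma> k \<in> bipartite_product_states"
      "\<rho> = (\<lambda>x y. \<Sum>k<n. complex_of_real (w k) * \<sigma> k x y)"
    using H0 by simp_all
  have "Phi3 (1/2) \<rho> = (\<lambda>x y. \<Sum>k<n. complex_of_real (w k) * Phi3 (1/2) (\<sigma> k) x y)"
    unfolding H(2) by (rule Phi3_sum)
  moreover have "psd (\<lambda>x y. \<Sum>k<n. complex_of_real (w k) * Phi3 (1/2) (\<sigma> k) x y)"
    by (rule psd_comb) (use H(1) psd_bps in blast)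
  ultimately show ?thesis by (simp only:)
qed

end
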